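(* Let $x\in\mathbb{R}^n$, $\alpha>0$, $\kappa>0$ and $d_{\min}>0$. Let $\mathcal{D}=\{d_1,\ldots,d_p\}\subset\mathbb{R}^n$ be a positive spanning set of $\mathbb{R}^n$ with $\operatorname{cm}(\mathcal{D})\ge\kappa$ and $\|d_i\|\ge d_{\min}\alpha$ for all $i=1,\ldots,p$. Then $\mathcal{D}$ is a $\Lambda$-positive spanning set for $B(x,\alpha)$ with $\Lambda:=\frac{1}{d_{\min}\kappa}$.
   Context: $\|\cdot\|$ is the Euclidean norm and $B(y,r)=\{z\in\mathbb{R}^n:\|z-y\|\le r\}$. A set $\{d_1,\ldots,d_p\}\subset\mathbb{R}^n$ is a positive spanning set of $\mathbb{R}^n$ if every $v\in\mathbb{R}^n$ can be written $v=\sum_i c_id_i$ with all $c_i\ge 0$. The cosine measure of a finite set $\mathcal{D}$ is $\operatorname{cm}(\mathcal{D}):=\min_{v\neq 0}\max_{d\in\mathcal{D},\, d\neq 0}\frac{d^Tv}{\|d\|\,\|v\|}$. Given $x\in\mathbb{R}^n$, $\alpha>0$ and $\Lambda>0$, a set $\{d_1,\ldots,d_p\}$ is a $\Lambda$-positive spanning set for $B(x,\alpha)$ if for every $v\in B(0,\alpha)$ there exists $c(v)\in\mathbb{R}^p$ with $c(v)\ge0$ componentwise such that $v=\sum_{i=1}^p c_i(v)d_i$ and $\sum_{i=1}^p c_i(v)\le\Lambda$. *)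

theory Defs
  imports "HOL-Analysis.Analysis"
begin

text \<open>A finite family d_1..d_p is represented by d :: nat => 'a with indices i < p.\<close>

definition positive_spanning :: "(nat \<Rightarrow> 'a::euclidean_space) \<Rightarrow> nat \<Rightarrow> bool" where
  "positive_spanning d p \<longleftrightarrow>
     (\<forall>v::'a. \<exists>c::nat \<Rightarrow> real. (\<forall>i<p. c i \<ge> 0) \<and> v = (\<Sum>i<p. c i *\<^sub>R d i))"

definition cosine_measure :: "'a::euclidean_space set \<Rightarrow> real" where
  "cosine_measure D =
     (INF v \<in> - {0}. Max ((\<lambda>e. (e \<bullet> v) / (norm e * norm v)) ` (D - {0})))"

definition Lambda_positive_spanning ::
  "(nat \<Rightarrow> 'a::euclidean_space) \<Rightarrow> nat \<Rightarrow> 'a \<Rightarrow> real \<Rightarrow> real \<Rightarrow> bool" where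
  "Lambda_positive_spanning d p x \<alpha> \<Lambda> \<longleftrightarrow>
     (\<forall>v \<in> cball 0 \<alpha>. \<exists>c::nat \<Rightarrow> real. (\<forall>i<p. c i \<ge> 0) \<and>
        v = (\<Sum>i<p. c i *\<^sub>R d i) \<and> (\<Sum>i<p. c i) \<le> \<Lambda>)"

end

theory Submission
  imports Defs
begin

theorem lemma3p3:
  fixes x :: "'a::euclidean_space" and \<alpha> \<kappa> dmin :: real
    and d :: "nat \<Rightarrow> 'a" and p :: nat
  assumes "\<alpha> > 0" and "\<kappa> > 0" and "dmin > 0"
    and "positive_spanning d p"
    and "cosine_measure (d ` {..<p}) \<ge> \<kappa>"
    and "\<forall>i<p. norm (d i) \<ge> dmin * \<alpha>"
  shows "Lambda_positive_spanning d p x \<alpha> (1 / (dmin * \<kappa>))"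
proof -
  have dpos: "norm (d i) > 0" if "i < p" for i
    using assms(6) that assms(1,3) by (meson mult_pos_pos order_less_le_trans)
  define e where "e i = (1 / norm (d i)) *\<^sub>R d i" for i
  define K where "K = convex hull (e ` {..<p})"
  have Keq: "K = {\<Sum>i<p. c i *\<^sub>R s i | c s. (\<forall>i\<in>{..<p}. c i \<ge> 0) \<and> sum c {..<p} = 1
         \<and> (\<forall>i\<in>{..<p}. s i \<in> {e i})}"
  proof -
    have "e ` {..<p} = \<Union>((\<lambda>i. {e i}) ` {..<p})" by auto
    then show ?thesis unfolding K_def
      by (subst convex_hull_finite_union[symmetric]) auto
  qed
  have fin: "finite (d ` {..<p} - {0})" by auto
  have ne: "d ` {..<p} - {0} \<noteq> {}"
  proof
    assume h: "d ` {..<p} - {0} = {}"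
    obtain b :: 'a where "b \<noteq> 0" using nonzero_Basis by blast
    obtain c where "b = (\<Sum>i<p. c i *\<^sub>R d i)" using assms(4) unfolding positive_spanning_def by blast
    moreover have "\<forall>i<p. d i = 0" using h by auto
    ultimately have "b = 0" by simp
    with \<open>b \<noteq> 0\<close> show False by simp
  qed
  have cos: "\<exists>i<p. e i \<bullet> u \<ge> \<kappa> * norm u" if "u \<noteq> 0" for u
  proof -
    let ?f = "\<lambda>v. Max ((\<lambda>e. (e \<bullet> v) / (norm e * norm v)) ` (d ` {..<p} - {0}))"
    have bdd: "bdd_below (?f ` (- {0}))"
    proof (rule bdd_belowI[of _ "-1"])
      fix y assume "y \<in> ?f ` (- {0})"
      then obtain v where v: "v \<noteq> 0" "y = ?f v" by auto
      show "-1 \<le> y"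
      proof -
        from ne obtain w where w: "w \<in> d ` {..<p} - {0}" by blast
        have "-1 \<le> (w \<bullet> v) / (norm w * norm v)"
        proof -
          have "\<bar>w \<bullet> v\<bar> \<le> norm w * norm v" by (rule Cauchy_Schwarz_ineq2)
          moreover have "norm w * norm v > 0" using w v by auto
          ultimately show ?thesis by (simp add: divide_simps)
        qed
        also have "\<dots> \<le> y" using v w fin by (auto intro!: Max_ge)
        finally show ?thesis .
      qed
    qed
    have "\<kappa> \<le> ?f u"
      using assms(5) unfolding cosine_measure_def
      using cINF_lower[OF bdd, of u] that by simp
    moreover note ne
    ultimately obtain w where w: "w \<in> d ` {..<p} - {0}" "\<kappa> \<le> (w \<bullet> u) / (norm w * norm u)"
      using Max_in[OF finite_imageI[OF fin] ] by (metis (no_types, lifting) empty_is_image imageE)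
    then obtain i where i: "i < p" "w = d i" by auto
    have "\<kappa> * norm u \<le> (w \<bullet> u) / norm w"
      using w(2) that i dpos[OF i(1)] by (simp add: divide_simps mult.commute mult.left_commute)
    also have "\<dots> = e i \<bullet> u" using i by (simp add: e_def)
    finally show ?thesis using i by blast
  qed
  have ball: "z \<in> K" if "norm z = \<kappa>" for z
  proof (rule ccontr)
    assume "z \<notin> K"
    have "convex K" unfolding K_def by simp
    moreover have "closed K" unfolding K_def
      by (simp add: compact_imp_closed finite_imp_compact_convex_hull)
    ultimately obtain a b where ab: "a \<bullet> z < b" "\<forall>y\<in>K. b < a \<bullet> y"
      using separating_hyperplane_closed_point \<open>z \<notin> K\<close> by blast
    let ?u = "-a"
    show False
    proof (cases "a = 0")
      case True
      obtain bb :: 'a where "bb \<noteq> 0" using nonzero_Basis by blast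
      then obtain i where i: "i < p" using cos by blast
      have "e i \<in> K" unfolding K_def using i by (simp add: hull_inc)
      hence "b < a \<bullet> e i" using ab by blast
      then show ?thesis using ab True by simp
    next
      case False
      then obtain i where i: "i < p" "e i \<bullet> ?u \<ge> \<kappa> * norm ?u" using cos[of "-a"] by auto
      have "e i \<in> K" unfolding K_def using i by (simp add: hull_inc)
      hence "b < a \<bullet> e i" using ab by blast
      moreover have "?u \<bullet> z \<le> norm ?u * norm z" by (rule norm_cauchy_schwarz)
      ultimately show False using i ab that by (simp add: inner_commute algebra_simps)
    qed
  qed
  show ?thesis unfolding Lambda_positive_spanning_def
  proof
    fix v :: 'a assume v: "v \<in> cball 0 \<alpha>"
    show "\<exists>c. (\<forall>i<p. 0 \<le> c i) \<and> v = (\<Sum>i<p. c i *\<^sub>R d i) \<and> sum c {..<p} \<le> 1 / (dmin * \<kappa>)"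
    proof (cases "v = 0")
      case True
      then show ?thesis using assms by (intro exI[of _ "\<lambda>_. 0"]) simp
    next
      case False
      let ?z = "(\<kappa> / norm v) *\<^sub>R v"
      have "norm ?z = \<kappa>" using False assms(2) by simp
      then have "?z \<in> K" by (rule ball)
      then obtain c where c: "\<forall>i<p. c i \<ge> 0" "sum c {..<p} = 1" "?z = (\<Sum>i<p. c i *\<^sub>R e i)"
      proof -
        from \<open>?z \<in> K\<close> obtain c s where cs: "?z = (\<Sum>i<p. c i *\<^sub>R s i)" "\<forall>i\<in>{..<p}. c i \<ge> 0"
          "sum c {..<p} = 1" "\<forall>i\<in>{..<p}. s i \<in> {e i}" unfolding Keq by blast
        have "(\<Sum>i<p. c i *\<^sub>R s i) = (\<Sum>i<p. c i *\<^sub>R e i)" using cs(4) by (intro sum.cong) auto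
        then show ?thesis using cs that by auto
      qed
      define c' where "c' i = (norm v / \<kappa>) * c i / norm (d i)" for i
      have "v = (norm v / \<kappa>) *\<^sub>R ?z" using False assms(2) by simp
      also have "\<dots> = (\<Sum>i<p. c' i *\<^sub>R d i)"
        unfolding c(3) scaleR_sum_right c'_def e_def by (simp add: scaleR_scaleR)
      finally have veq: "v = (\<Sum>i<p. c' i *\<^sub>R d i)" .
      have "sum c' {..<p} \<le> (\<Sum>i<p. (norm v / \<kappa>) * c i / (dmin * \<alpha>))"
        unfolding c'_def
      proof (rule sum_mono)
        fix i assume "i \<in> {..<p}"
        then have "i < p" by simp
        show "norm v / \<kappa> * c i / norm (d i) \<le> norm v / \<kappa> * c i / (dmin * \<alpha>)"
          using assms(1,2,3,6) c(1) \<open>i < p\<close> dpos[OF \<open>i < p\<close>]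
          by (intro divide_left_mono) auto
      qed
      also have "\<dots> = (norm v / \<kappa>) / (dmin * \<alpha>)"
        using c(2) by (simp add: sum_divide_distrib[symmetric] sum_distrib_left[symmetric])
      also have "\<dots> \<le> \<alpha> / \<kappa> / (dmin * \<alpha>)"
        using v assms(1,2,3) by (intro divide_right_mono) (auto simp: divide_right_mono)
      also have "\<dots> = 1 / (dmin * \<kappa>)" using assms(1) by simp
      finally have sle: "sum c' {..<p} \<le> 1 / (dmin * \<kappa>)" .
      have "\<forall>i<p. c' i \<ge> 0" unfolding c'_def using c(1) assms(2) by auto
      then show ?thesis using veq sle by blast
    qed
  qed
qed

end
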